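(* Let $S\le T_n$ be a transformation monoid and let $G\le S_n$ be a group normalizing $S$ (i.e. $g^{-1}Sg=S$ for all $g\in G$) such that $g^2=1$ for all $g\in G$. If $SG$ is intra-regular, then $S$ is intra-regular.
   Context: A transformation monoid is a subsemigroup of $T_n$ containing the identity map. $SG=\{sg:s\in S,g\in G\}$, a semigroup. A monoid $U$ is intra-regular if for every $a\in U$ there exist $b,c\in U$ with $ba^2c=a$. *)

theory Defs
  imports Main
begin

text \<open>Transformations of [n] = {0..<n} are represented as functions nat => nat
that map {0..<n} into itself and fix every i >= n (so they are canonical).
Transformations act on the right: the product s g means "first s, then g",
i.e. tmult s g = g o s.\<close>

definition T :: "nat \<Rightarrow> (nat \<Rightarrow> nat) set" where
  "T n = {f. (\<forall>i<n. f i < n) \<and> (\<forall>i\<ge>n. f i = i)}"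

definition Sym :: "nat \<Rightarrow> (nat \<Rightarrow> nat) set" where
  "Sym n = {f \<in> T n. bij f}"

definition tmult :: "(nat \<Rightarrow> nat) \<Rightarrow> (nat \<Rightarrow> nat) \<Rightarrow> (nat \<Rightarrow> nat)" where
  "tmult s g = g \<circ> s"

definition transformation_monoid :: "nat \<Rightarrow> (nat \<Rightarrow> nat) set \<Rightarrow> bool" where
  "transformation_monoid n S \<longleftrightarrow> S \<subseteq> T n \<and> id \<in> S \<and>
     (\<forall>x\<in>S. \<forall>y\<in>S. tmult x y \<in> S)"

definition perm_group :: "nat \<Rightarrow> (nat \<Rightarrow> nat) set \<Rightarrow> bool" where
  "perm_group n G \<longleftrightarrow> G \<subseteq> Sym n \<and> id \<in> G \<and>
     (\<forall>x\<in>G. \<forall>y\<in>G. tmult x y \<in> G) \<and> (\<forall>x\<in>G. inv x \<in> G)"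

definition normalizes :: "(nat \<Rightarrow> nat) set \<Rightarrow> (nat \<Rightarrow> nat) set \<Rightarrow> bool" where
  "normalizes G S \<longleftrightarrow> (\<forall>g\<in>G. {tmult (tmult (inv g) s) g | s. s \<in> S} = S)"

definition setprod :: "(nat \<Rightarrow> nat) set \<Rightarrow> (nat \<Rightarrow> nat) set \<Rightarrow> (nat \<Rightarrow> nat) set" where
  "setprod S G = {tmult s g | s g. s \<in> S \<and> g \<in> G}"

definition intra_regular :: "(nat \<Rightarrow> nat) set \<Rightarrow> bool" where
  "intra_regular U \<longleftrightarrow>
     (\<forall>a\<in>U. \<exists>b\<in>U. \<exists>c\<in>U. tmult (tmult (tmult b a) a) c = a)"

end

theory Submission
  imports Defs "HOL-Library.FuncSet"
begin

lemma T_comp: "f \<in> T n \<Longrightarrow> g \<in> T n \<Longrightarrow> g \<circ> f \<in> T n"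
  by (auto simp: T_def)

lemma T_pow: "f \<in> T n \<Longrightarrow> f ^^ k \<in> T n"
  by (induction k) (auto simp: T_def)

lemma S_pow: "transformation_monoid n S \<Longrightarrow> a \<in> S \<Longrightarrow> a ^^ k \<in> S"
proof (induction k)
  case 0 then show ?case by (simp add: transformation_monoid_def id_def[symmetric])
next
  case (Suc k)
  then have "tmult (a ^^ k) a \<in> S" by (simp add: transformation_monoid_def)
  then show ?case by (simp add: tmult_def comp_def)
qed

lemma key:
  assumes aT: "a \<in> T n" and bT: "b \<in> T n" and cT: "c \<in> T n"
    and eq: "a = c \<circ> a \<circ> a \<circ> b"
  shows "\<exists>m\<ge>2. a ^^ m = a"
proof -
  define A where "A = a ` {..<n}"
  have fin: "finite A" by (simp add: A_def)
  have aA: "a ` A \<subseteq> A" using aT by (auto simp: A_def T_def)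
  have bn: "b ` {..<n} \<subseteq> {..<n}" using bT by (auto simp: T_def)
  have "A = (c \<circ> a \<circ> a \<circ> b) ` {..<n}" using eq by (simp add: A_def)
  also have "\<dots> = c ` (a ` (a ` (b ` {..<n})))" by (simp add: image_comp)
  also have "\<dots> \<subseteq> c ` (a ` A)" using bn by (auto simp: A_def)
  finally have "A \<subseteq> c ` (a ` A)" .
  then have "card A \<le> card (c ` (a ` A))" using fin by (intro card_mono) auto
  also have "\<dots> \<le> card (a ` A)" using fin by (intro card_image_le) auto
  finally have c1: "card A \<le> card (a ` A)" .
  have c2: "card (a ` A) \<le> card A" using fin by (rule card_image_le)
  have inj: "inj_on a A" using c1 c2 fin by (intro eq_card_imp_inj_on) auto
  have surj: "a ` A = A" using c1 c2 fin aA by (intro card_subset_eq) auto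
  have bij: "bij_betw a A A" using inj surj by (simp add: bij_betw_def)
  define F where "F k = restrict (a ^^ k) {..<n}" for k
  have "range F \<subseteq> {..<n} \<rightarrow>\<^sub>E {..<n}"
    using T_pow[OF aT] by (auto simp: F_def T_def PiE_def extensional_def)
  moreover have "finite ({..<n} \<rightarrow>\<^sub>E {..<n})" by (intro finite_PiE) auto
  ultimately have "finite (range F)" by (rule finite_subset)
  then have "\<not> inj F" using finite_imageD by blast
  then obtain i j where ij: "F i = F j" "i \<noteq> j" by (auto simp: inj_def)
  then obtain i j where ij: "F i = F j" "i < j"
    by (metis linorder_neqE_nat)
  have pij: "(a ^^ i) x = (a ^^ j) x" for x
  proof (cases "x < n")
    case True then show ?thesis using fun_cong[OF ij(1), of x] by (simp add: F_def)
  next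
    case False then show ?thesis using T_pow[OF aT, of i] T_pow[OF aT, of j] by (simp add: T_def)
  qed
  define d where "d = j - i"
  have jd: "j = i + d" "d \<ge> 1" using ij(2) by (auto simp: d_def)
  have bi: "bij_betw (a ^^ i) A A" by (rule bij_betw_funpow[OF bij])
  have bd: "bij_betw (a ^^ d) A A" by (rule bij_betw_funpow[OF bij])
  have idA: "(a ^^ d) y = y" if "y \<in> A" for y
  proof -
    have "(a ^^ i) ((a ^^ d) y) = (a ^^ i) y"
      using pij[of y] by (simp add: jd funpow_add)
    moreover have "(a ^^ d) y \<in> A" using bd that by (auto simp: bij_betw_def)
    ultimately show ?thesis using bi that by (auto simp: bij_betw_def inj_on_def)
  qed
  have "a ^^ (Suc d) = a"
  proof
    fix x
    show "(a ^^ Suc d) x = a x"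
    proof (cases "x < n")
      case True
      then have "a x \<in> A" by (simp add: A_def)
      then show ?thesis using idA by (simp add: funpow_Suc_right del: funpow.simps)
    next
      case False then show ?thesis using T_pow[OF aT, of "Suc d"] aT by (simp add: T_def)
    qed
  qed
  then show ?thesis using jd by (intro exI[of _ "Suc d"]) auto
qed

theorem proposition4p7:
  fixes n :: nat and S G :: "(nat \<Rightarrow> nat) set"
  assumes "transformation_monoid n S"
    and "perm_group n G"
    and "normalizes G S"
    and "\<forall>g\<in>G. tmult g g = id"
    and "intra_regular (setprod S G)"
  shows "intra_regular S"
  unfolding intra_regular_def
proof
  fix a assume aS: "a \<in> S"
  have ST: "S \<subseteq> T n" and idS: "id \<in> S" using assms(1) by (auto simp: transformation_monoid_def)
  have GT: "G \<subseteq> T n" and idG: "id \<in> G" using assms(2) by (auto simp: perm_group_def Sym_def)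
  have SGT: "setprod S G \<subseteq> T n"
    using ST GT by (auto simp: setprod_def tmult_def intro!: T_comp)
  have "a = tmult a id" by (simp add: tmult_def)
  then have "a \<in> setprod S G" unfolding setprod_def using aS idG by blast
  then obtain b c where bc: "b \<in> setprod S G" "c \<in> setprod S G"
    "tmult (tmult (tmult b a) a) c = a"
    using assms(5) unfolding intra_regular_def by blast
  have aT: "a \<in> T n" using aS ST by auto
  have "a = c \<circ> a \<circ> a \<circ> b" using bc(3) by (simp add: tmult_def comp_assoc)
  then obtain m where m: "m \<ge> 2" "a ^^ m = a"
    using key[OF aT] bc SGT by blast
  obtain k where k: "m = Suc (Suc k)" using m(1) by (metis add_2_eq_Suc le_Suc_ex)
  have "tmult (tmult (tmult id a) a) (a ^^ k) = a ^^ m"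
    unfolding k by (simp add: tmult_def comp_assoc funpow_Suc_right del: funpow.simps)
  also have "\<dots> = a" using m by simp
  finally show "\<exists>b\<in>S. \<exists>c\<in>S. tmult (tmult (tmult b a) a) c = a"
    using idS S_pow[OF assms(1) aS] by blast
qed

end
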